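(* For every integer $n\ge 1$, let $M_F(n)$ denote the maximum modulus of an independence root over all forests on $n$ vertices. Then $$M_F(n)\le \begin{cases} 2^{\frac{n-1}{2}}+\frac{n-1}{2} & \text{if } n \text{ is odd},\\ 2^{\frac{n-2}{2}}+\frac{n}{2} & \text{if } n \text{ is even}.\end{cases}$$
   Context: For a finite simple graph $G$, the independence polynomial is $i(G,x)=\sum_{k=0}^{\alpha(G)} i_k x^k$, where $i_k$ is the number of independent sets of size $k$ in $G$ (with $i_0=1$) and $\alpha(G)$ is the independence number. Its complex roots are the independence roots of $G$. A forest is an acyclic graph. *)

theory Defs
  imports "HOL-Analysis.Analysis" "HOL-Computational_Algebra.Polynomial"
begin

definition simple_graph :: "'a set \<Rightarrow> ('a \<Rightarrow> 'a \<Rightarrow> bool) \<Rightarrow> bool" where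
  "simple_graph V E \<longleftrightarrow> finite V \<and> (\<forall>u v. E u v \<longrightarrow> u \<in> V \<and> v \<in> V)
     \<and> (\<forall>u v. E u v \<longrightarrow> E v u) \<and> (\<forall>v. \<not> E v v)"

definition is_cycle :: "'a set \<Rightarrow> ('a \<Rightarrow> 'a \<Rightarrow> bool) \<Rightarrow> 'a list \<Rightarrow> bool" where
  "is_cycle V E cs \<longleftrightarrow> length cs \<ge> 3 \<and> distinct cs \<and> set cs \<subseteq> V
     \<and> (\<forall>i. Suc i < length cs \<longrightarrow> E (cs ! i) (cs ! Suc i))
     \<and> E (last cs) (hd cs)"

definition forest :: "'a set \<Rightarrow> ('a \<Rightarrow> 'a \<Rightarrow> bool) \<Rightarrow> bool" where
  "forest V E \<longleftrightarrow> simple_graph V E \<and> (\<nexists>cs. is_cycle V E cs)"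

definition independent_set :: "'a set \<Rightarrow> ('a \<Rightarrow> 'a \<Rightarrow> bool) \<Rightarrow> 'a set \<Rightarrow> bool" where
  "independent_set V E S \<longleftrightarrow> S \<subseteq> V \<and> (\<forall>u\<in>S. \<forall>v\<in>S. \<not> E u v)"

definition indep_count :: "'a set \<Rightarrow> ('a \<Rightarrow> 'a \<Rightarrow> bool) \<Rightarrow> nat \<Rightarrow> nat" where
  "indep_count V E k = card {S. independent_set V E S \<and> card S = k}"

text \<open>Independence polynomial i(G,x) = sum_k i_k x^k (complex coefficients);
  i_k = 0 for k > card V, so summing up to card V covers up to alpha(G).\<close>

definition indep_poly :: "'a set \<Rightarrow> ('a \<Rightarrow> 'a \<Rightarrow> bool) \<Rightarrow> complex poly" where
  "indep_poly V E = (\<Sum>k\<le>card V. monom (of_nat (indep_count V E k)) k)"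

end

theory Submission
  imports Defs
begin


definition cnt :: "('a \<Rightarrow> 'a \<Rightarrow> bool) \<Rightarrow> 'a set \<Rightarrow> nat \<Rightarrow> nat" where
  "cnt E W k = card {S. S \<subseteq> W \<and> (\<forall>u\<in>S. \<forall>v\<in>S. \<not> E u v) \<and> card S = k}"

lemma cnt_fin: "finite W \<Longrightarrow> finite {S. S \<subseteq> W \<and> P S}"
  by (rule finite_subset[of _ "Pow W"]) auto

lemma cnt_0: "finite W \<Longrightarrow> cnt E W 0 = 1"
proof -
  assume f: "finite W"
  have "{S. S \<subseteq> W \<and> (\<forall>u\<in>S. \<forall>v\<in>S. \<not> E u v) \<and> card S = 0} = {{}}"
    using f by (auto, metis card_0_eq empty_iff finite_subset)
  then show ?thesis by (simp add: cnt_def)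
qed

lemma cnt_mono: "finite W' \<Longrightarrow> W \<subseteq> W' \<Longrightarrow> cnt E W k \<le> cnt E W' k"
  unfolding cnt_def by (rule card_mono[OF cnt_fin]) auto

lemma cnt_down: assumes "finite W" "0 < cnt E W (Suc k)" shows "0 < cnt E W k"
proof -
  have "{S. S \<subseteq> W \<and> (\<forall>u\<in>S. \<forall>v\<in>S. \<not> E u v) \<and> card S = Suc k} \<noteq> {}"
    using assms(2) unfolding cnt_def by (metis card.empty less_irrefl)
  then obtain S where S: "S \<subseteq> W" "\<forall>u\<in>S. \<forall>v\<in>S. \<not> E u v" "card S = Suc k"
    by blast
  have fS: "finite S" using S(1) assms(1) finite_subset by blast
  have "S \<noteq> {}" using S(3) by (metis card.empty nat.distinct(1))
  then obtain x where x: "x \<in> S" by blast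
  have "card (S - {x}) = k" using S(3) x fS by simp
  hence mem: "S - {x} \<in> {S. S \<subseteq> W \<and> (\<forall>u\<in>S. \<forall>v\<in>S. \<not> E u v) \<and> card S = k}"
    using S(1,2) by blast
  have fin: "finite {S. S \<subseteq> W \<and> (\<forall>u\<in>S. \<forall>v\<in>S. \<not> E u v) \<and> card S = k}"
    by (rule cnt_fin[OF assms(1)])
  show ?thesis unfolding cnt_def using card_gt_0_iff fin mem by blast
qed

lemma cnt_big: assumes "finite W" "card W < k" shows "cnt E W k = 0"
proof -
  have eq: "{S. S \<subseteq> W \<and> (\<forall>u\<in>S. \<forall>v\<in>S. \<not> E u v) \<and> card S = k} = {}"
    using assms card_mono by fastforce
  show ?thesis unfolding cnt_def eq by simp
qed

lemma cnt_rec: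
  assumes symE: "\<And>x y. E x y \<Longrightarrow> E y x" and irrE: "\<And>x. \<not> E x x"
    and f: "finite W" and v: "v \<in> W"
  shows "cnt E W (Suc k) = cnt E (W - {v}) (Suc k) + cnt E (W - insert v {w. E v w}) k"
proof -
  let ?I = "\<lambda>S. \<forall>u\<in>S. \<forall>v\<in>S. \<not> E u v"
  let ?F = "{S. S \<subseteq> W \<and> ?I S \<and> card S = Suc k}"
  let ?F1 = "{S. S \<subseteq> W - {v} \<and> ?I S \<and> card S = Suc k}"
  let ?F2 = "{S. S \<subseteq> W - insert v {w. E v w} \<and> ?I S \<and> card S = k}"
  have split: "?F = ?F1 \<union> insert v ` ?F2"
  proof (rule set_eqI, rule iffI)
    fix S assume "S \<in> ?F"
    hence S: "S \<subseteq> W" "?I S" "card S = Suc k" by auto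
    have fS: "finite S" using S(1) f finite_subset by blast
    show "S \<in> ?F1 \<union> insert v ` ?F2"
    proof (cases "v \<in> S")
      case True
      have "S - {v} \<in> ?F2" using S True fS by auto
      moreover have "S = insert v (S - {v})" using True by auto
      ultimately show ?thesis by blast
    next
      case False thus ?thesis using S by auto
    qed
  next
    fix S assume "S \<in> ?F1 \<union> insert v ` ?F2"
    thus "S \<in> ?F"
    proof
      assume "S \<in> ?F1" thus ?thesis by auto
    next
      assume "S \<in> insert v ` ?F2"
      then obtain T where T: "T \<in> ?F2" "S = insert v T" by blast
      have fT: "finite T" using T(1) f finite_subset by blast
      have vT: "v \<notin> T" using T by auto
      have "?I S" using T(1) irrE symE unfolding T(2) by auto
      moreover have "card S = Suc k" using T vT fT by auto
      moreover have "S \<subseteq> W" using T v by auto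
      ultimately show ?thesis by auto
    qed
  qed
  have disj: "?F1 \<inter> insert v ` ?F2 = {}" by auto
  have inj: "inj_on (insert v) ?F2"
    by (rule inj_onI) (metis (no_types, lifting) Diff_iff insertCI insert_Diff_single mem_Collect_eq subsetD singletonI Diff_insert_absorb)
  have fin1: "finite ?F1" by (rule finite_subset[of _ "Pow W"]) (auto simp: f)
  have fin2: "finite ?F2" by (rule finite_subset[of _ "Pow W"]) (auto simp: f)
  have "card ?F = card ?F1 + card (insert v ` ?F2)"
    unfolding split by (rule card_Un_disjoint[OF fin1 finite_imageI[OF fin2] disj])
  also have "card (insert v ` ?F2) = card ?F2" by (rule card_image[OF inj])
  finally show ?thesis unfolding cnt_def .
qed



lemma forest_leaf:
  assumes fo: "forest V E" and WV: "W \<subseteq> V" and ne: "W \<noteq> {}"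
  shows "\<exists>v\<in>W. \<forall>x\<in>W. \<forall>y\<in>W. E v x \<longrightarrow> E v y \<longrightarrow> x = y"
proof -
  have sg: "simple_graph V E" and nc: "\<And>cs. \<not> is_cycle V E cs" using fo unfolding forest_def by auto
  have fV: "finite V" and symE: "\<And>x y. E x y \<Longrightarrow> E y x" and irrE: "\<And>x. \<not> E x x"
    using sg unfolding simple_graph_def by auto
  have fW: "finite W" using fV WV finite_subset by blast
  define P where "P = {p. p \<noteq> [] \<and> distinct p \<and> set p \<subseteq> W \<and> (\<forall>i. Suc i < length p \<longrightarrow> E (p!i) (p!Suc i))}"
  have finP: "finite P"
  proof (rule finite_subset[OF _ finite_lists_length_le[OF fW, of "card W"]])
    show "P \<subseteq> {xs. set xs \<subseteq> W \<and> length xs \<le> card W}"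
    proof
      fix q assume "q \<in> P"
      hence q: "distinct q" "set q \<subseteq> W" unfolding P_def by auto
      have "length q = card (set q)" using distinct_card[OF q(1)] by simp
      also have "\<dots> \<le> card W" using card_mono[OF fW q(2)] .
      finally show "q \<in> {xs. set xs \<subseteq> W \<and> length xs \<le> card W}" using q by simp
    qed
  qed
  obtain w where w: "w \<in> W" using ne by blast
  have "[w] \<in> P" unfolding P_def using w by auto
  hence neP: "P \<noteq> {}" by blast
  define L where "L = Max (length ` P)"
  have "L \<in> length ` P" unfolding L_def using finP neP by simp
  then obtain p where pP: "p \<in> P" and pL: "length p = L" by blast
  have maxL: "\<And>q. q \<in> P \<Longrightarrow> length q \<le> length p"
    unfolding pL L_def using finP by simp
  have p: "p \<noteq> []" "distinct p" "set p \<subseteq> W" "\<And>i. Suc i < length p \<Longrightarrow> E (p!i) (p!Suc i)"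
    using pP unfolding P_def by auto
  show ?thesis
  proof (rule bexI[of _ "p!0"], intro ballI impI, rule ccontr)
    show "p!0 \<in> W" using p by (simp add: subset_iff)
    fix x y assume x: "x \<in> W" and y: "y \<in> W" and ex: "E (p!0) x" and ey: "E (p!0) y" and xy: "x \<noteq> y"
    define z where "z = (if 2 \<le> length p \<and> x = p!1 then y else x)"
    have z: "z \<in> W" "E (p!0) z" "2 \<le> length p \<Longrightarrow> z \<noteq> p!1"
      unfolding z_def using x y ex ey xy by auto
    show False
    proof (cases "z \<in> set p")
      case False
      have "z # p \<in> P" unfolding P_def
      proof (intro CollectI conjI allI impI)
        fix i assume i: "Suc i < length (z # p)"
        show "E ((z # p) ! i) ((z # p) ! Suc i)"
        proof (cases i)
          case 0 thus ?thesis using z(2) symE by simp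
        next
          case (Suc j) thus ?thesis using i p(4)[of j] by simp
        qed
      qed (use False p z in auto)
      then show False using maxL by fastforce
    next
      case True
      then obtain j where j: "j < length p" "p!j = z" by (meson in_set_conv_nth)
      have j0: "j \<noteq> 0" using j z(2) irrE by (metis)
      have j1: "j \<noteq> 1"
      proof
        assume "j = 1" thus False using j z(3) by auto
      qed
      define cs where "cs = take (Suc j) p"
      have "is_cycle V E cs" unfolding is_cycle_def
      proof (intro conjI allI impI)
        show "3 \<le> length cs" using j j0 j1 unfolding cs_def by auto
        show "distinct cs" using p(2) unfolding cs_def by simp
        show "set cs \<subseteq> V" using p(3) WV set_take_subset unfolding cs_def by fastforce
        fix i assume "Suc i < length cs"
        thus "E (cs ! i) (cs ! Suc i)" using p(4)[of i] j unfolding cs_def by auto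
      next
        have "last cs = z" using j unfolding cs_def by (simp add: take_Suc_conv_app_nth)
        moreover have "hd cs = p!0" using p(1) unfolding cs_def by (simp add: hd_conv_nth)
        ultimately show "E (last cs) (hd cs)" using z(2) symE by simp
      qed
      thus False using nc by blast
    qed
  qed
qed



definition Fb :: "nat \<Rightarrow> real" where
  "Fb n = (if even n then 2^(n div 2)/2 + real n/2 else 2^(n div 2) + (real n - 1)/2)"

lemma Fb_ge1: "1 \<le> n \<Longrightarrow> 1 \<le> Fb n"
proof (cases "even n")
  case True
  then obtain m where m: "n = 2*m" by auto
  assume "1 \<le> n"
  hence "1 \<le> m" using m by simp
  have "real m \<ge> 1" using \<open>1 \<le> m\<close> by simp
  moreover have "(0::real) \<le> 2^m/2" by simp
  ultimately have "1 \<le> (2::real)^m/2 + real m" by linarith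
  thus ?thesis using True m unfolding Fb_def by simp
next
  case False
  then obtain m where m: "n = 2*m+1" using oddE by blast
  have "(1::real) \<le> 2^m" by simp
  hence "1 \<le> (2::real)^m + real m" using of_nat_0_le_iff[of m] by linarith
  thus ?thesis using False m unfolding Fb_def by simp
qed

lemma Fb_mono1: "Fb n \<le> Fb (Suc n)"
proof (cases "even n")
  case True
  then obtain m where m: "n = 2*m" by auto
  have "(1::real) \<le> 2^m" by simp
  thus ?thesis using m unfolding Fb_def by simp
next
  case False
  then obtain m where m: "n = 2*m+1" using oddE by blast
  have "(1::real) \<le> 2^m" by simp
  thus ?thesis using m unfolding Fb_def by simp
qed

lemma Fb_mono: "a \<le> b \<Longrightarrow> Fb a \<le> Fb b"
  by (rule lift_Suc_mono_le[of Fb, OF Fb_mono1])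

lemma Fb_step1: "1 \<le> n \<Longrightarrow> 1 + Fb n \<le> Fb (Suc n)"
proof (cases "even n")
  case True
  then obtain m where m: "n = 2*m" by auto
  assume "1 \<le> n"
  hence "1 \<le> m" using m by simp
  then obtain l where l: "m = Suc l" by (cases m) auto
  have "(1::real) \<le> 2^l" by simp
  thus ?thesis using m l unfolding Fb_def by simp
next
  case False
  then obtain m where m: "n = 2*m+1" using oddE by blast
  thus ?thesis using m unfolding Fb_def by simp
qed

lemma Fb_step3: "1 + Fb (Suc n) + 2^(n div 2) \<le> Fb (n+3)"
proof (cases "even n")
  case True
  then obtain m where m: "n = 2*m" by auto
  thus ?thesis using m unfolding Fb_def by simp
next
  case False
  then obtain m where m: "n = 2*m+1" using oddE by blast
  thus ?thesis using m unfolding Fb_def by simp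
qed

lemma Fb_eq: "1 \<le> n \<Longrightarrow> Fb n = (if odd n then 2 powr ((real n - 1) / 2) + (real n - 1) / 2
                    else 2 powr ((real n - 2) / 2) + real n / 2)"
proof (cases "even n")
  case True
  then obtain m where m: "n = 2*m" by auto
  assume "1 \<le> n"
  hence "1 \<le> m" using m by simp
  then obtain l where l: "m = Suc l" by (cases m) auto
  have "(real n - 2) / 2 = real l" using m l by simp
  hence "2 powr ((real n - 2) / 2) = 2^l" by (simp add: powr_realpow)
  thus ?thesis using m l unfolding Fb_def by simp
next
  case False
  then obtain m where m: "n = 2*m+1" using oddE by blast
  have "(real n - 1) / 2 = real m" using m by simp
  hence "2 powr ((real n - 1) / 2) = 2^m" by (simp add: powr_realpow)
  thus ?thesis using m unfolding Fb_def by simp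
qed



lemma ek_ring: "(1 - w) * (Q + c' * p) + c' * (w * p) = ((1 - w) * Q + c * p) + (c' - c) * (p::complex)"
  by (simp add: algebra_simps)

lemma ek_aux:
  fixes b :: "nat \<Rightarrow> real" and w :: complex
  assumes "1 \<le> cmod w"
  shows "(\<And>k. k < d \<Longrightarrow> b k \<le> b (Suc k)) \<Longrightarrow> (\<And>k. k \<le> d \<Longrightarrow> 0 \<le> b k) \<Longrightarrow>
    cmod ((1 - w) * (\<Sum>k\<le>d. of_real (b k) * w^k) + of_real (b d) * w^(Suc d)) \<le> b d * cmod w ^ d"
proof (induction d)
  case 0
  have "(1 - w) * of_real (b 0) + of_real (b 0) * w = of_real (b 0)" by (simp add: algebra_simps)
  thus ?case using "0.prems"(2)[of 0] by simp
next
  case (Suc d)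
  have IH: "cmod ((1 - w) * (\<Sum>k\<le>d. of_real (b k) * w^k) + of_real (b d) * w^(Suc d)) \<le> b d * cmod w ^ d"
    using Suc.IH Suc.prems by simp
  have le: "b d \<le> b (Suc d)" using Suc.prems(1) by simp
  have bd: "0 \<le> b d" using Suc.prems(2) by simp
  let ?X = "(1 - w) * (\<Sum>k\<le>d. of_real (b k) * w^k) + of_real (b d) * w^(Suc d)"
  have eq: "(1 - w) * (\<Sum>k\<le>Suc d. of_real (b k) * w^k) + of_real (b (Suc d)) * w^(Suc (Suc d))
      = ?X + of_real (b (Suc d) - b d) * w^(Suc d)"
    unfolding sum.atMost_Suc power_Suc[of w "Suc d"] of_real_diff
    by (rule ek_ring)
  have "cmod (?X + of_real (b (Suc d) - b d) * w^(Suc d)) \<le> cmod ?X + cmod (of_real (b (Suc d) - b d) * w^(Suc d))"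
    by (rule norm_triangle_ineq)
  also have "cmod (of_real (b (Suc d) - b d) * w^(Suc d)) = (b (Suc d) - b d) * cmod w ^ Suc d"
    using le by (simp add: norm_mult norm_power del: of_real_diff)
  also have "cmod ?X \<le> b d * cmod w ^ Suc d"
  proof -
    have "cmod w ^ d \<le> cmod w ^ Suc d" using assms(1) by (intro power_increasing) auto
    hence "b d * cmod w ^ d \<le> b d * cmod w ^ Suc d" using bd by (rule mult_left_mono)
    thus ?thesis using IH by linarith
  qed
  finally have "cmod (?X + of_real (b (Suc d) - b d) * w^(Suc d)) \<le> b (Suc d) * cmod w ^ Suc d"
    by (simp add: algebra_simps)
  thus ?case unfolding eq .
qed

lemma ek:
  fixes a :: "nat \<Rightarrow> real" and z :: complex and R :: real
  assumes pos: "\<And>k. k \<le> d \<Longrightarrow> 0 < a k" and rat: "\<And>k. k < d \<Longrightarrow> a k \<le> R * a (Suc k)"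
    and R: "0 < R" and root: "(\<Sum>k\<le>d. of_real (a k) * z^k) = 0"
  shows "cmod z \<le> R"
proof (rule ccontr)
  assume "\<not> cmod z \<le> R"
  hence zR: "R < cmod z" by simp
  define w where "w = z / of_real R"
  define b where "b k = a k * R^k" for k
  have w1: "1 < cmod w" using zR R unfolding w_def by (simp add: norm_divide)
  have bm: "\<And>k. k < d \<Longrightarrow> b k \<le> b (Suc k)"
  proof -
    fix k assume "k < d"
    hence "a k * R^k \<le> (R * a (Suc k)) * R^k" using rat R by (simp add: mult_right_mono)
    thus "b k \<le> b (Suc k)" unfolding b_def by (simp add: algebra_simps)
  qed
  have bnn: "\<And>k. k \<le> d \<Longrightarrow> 0 \<le> b k" using pos R unfolding b_def by (simp add: less_imp_le)
  have bd: "0 < b d" using pos[of d] R unfolding b_def by simp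
  have "(\<Sum>k\<le>d. of_real (b k) * w^k) = (\<Sum>k\<le>d. of_real (a k) * z^k)"
  proof (rule sum.cong[OF refl])
    fix k
    have "of_real (b k) * w^k = of_real (a k) * (of_real R ^ k * (z / of_real R)^k)"
      unfolding b_def w_def by simp
    also have "of_real R ^ k * (z / of_real R)^k = z^k" using R by (simp add: power_divide)
    finally show "of_real (b k) * w^k = of_real (a k) * z^k" .
  qed
  hence s0: "(\<Sum>k\<le>d. of_real (b k) * w^k) = 0" using root by simp
  have "cmod ((1 - w) * (\<Sum>k\<le>d. of_real (b k) * w^k) + of_real (b d) * w^(Suc d)) \<le> b d * cmod w ^ d"
    by (rule ek_aux) (use w1 bm bnn in auto)
  hence "b d * cmod w ^ Suc d \<le> b d * cmod w ^ d" unfolding s0 using bd by (simp add: norm_mult norm_power)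
  hence "cmod w ^ Suc d \<le> cmod w ^ d" using bd by simp
  hence "cmod w * cmod w ^ d \<le> 1 * cmod w ^ d" by simp
  moreover have "0 < cmod w ^ d" using w1 by (intro zero_less_power) linarith
  ultimately have "cmod w \<le> 1" by (rule mult_right_le_imp_le)
  thus False using w1 by linarith
qed

lemma cnt_down_le: "finite W \<Longrightarrow> 0 < cnt E W m \<Longrightarrow> k \<le> m \<Longrightarrow> 0 < cnt E W k"
proof (induction m)
  case 0 thus ?case by simp
next
  case (Suc m)
  show ?case
  proof (cases "k = Suc m")
    case True thus ?thesis using Suc.prems by simp
  next
    case False
    hence "k \<le> m" using Suc.prems by simp
    moreover have "0 < cnt E W m" using cnt_down[OF Suc.prems(1,2)] .
    ultimately show ?thesis using Suc.IH Suc.prems(1) by blast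
  qed
qed

lemma leaf_setup:
  assumes fo: "forest V E" and WV: "W \<subseteq> V" and ne: "W \<noteq> {}"
  obtains v where "v \<in> W" "\<And>i. cnt E W (Suc i) = cnt E (W - {v}) (Suc i) + cnt E (W - {v}) i"
  | v u where "v \<in> W" "u \<in> W - {v}"
      "\<And>i. cnt E W (Suc i) = cnt E (W - {v}) (Suc i) + cnt E (W - {v} - {u}) i"
      "\<And>i. cnt E (W - {v}) (Suc i) = cnt E (W - {v} - {u}) (Suc i) + cnt E (W - {v} - insert u {w. E u w}) i"
proof -
  have sg: "simple_graph V E" using fo unfolding forest_def by auto
  have fV: "finite V" and symE: "\<And>x y. E x y \<Longrightarrow> E y x" and irrE: "\<And>x. \<not> E x x"
    using sg unfolding simple_graph_def by auto
  have fW: "finite W" using fV WV finite_subset by blast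
  obtain v where v: "v \<in> W" and lf: "\<forall>x\<in>W. \<forall>y\<in>W. E v x \<longrightarrow> E v y \<longrightarrow> x = y"
    using forest_leaf[OF fo WV ne] by blast
  have r: "\<And>i. cnt E W (Suc i) = cnt E (W - {v}) (Suc i) + cnt E (W - insert v {w. E v w}) i"
    by (rule cnt_rec[OF symE irrE fW v])
  show ?thesis
  proof (cases "\<exists>u\<in>W. E v u")
    case False
    hence eqs: "W - insert v {w. E v w} = W - {v}" by blast
    have r': "\<And>i. cnt E W (Suc i) = cnt E (W - {v}) (Suc i) + cnt E (W - {v}) i" using r unfolding eqs .
    show ?thesis by (rule that(1)[OF v r'])
  next
    case True
    then obtain u where u: "u \<in> W" "E v u" by blast
    have uv: "u \<noteq> v" using u irrE by auto
    have lf': "\<And>x. x \<in> W \<Longrightarrow> E v x \<Longrightarrow> x = u" using lf u by blast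
    have eqs: "W - insert v {w. E v w} = W - {v} - {u}" using u(2) lf' by blast
    have r1: "\<And>i. cnt E W (Suc i) = cnt E (W - {v}) (Suc i) + cnt E (W - {v} - {u}) i" using r unfolding eqs .
    have uA: "u \<in> W - {v}" using u uv by blast
    have fA: "finite (W - {v})" using fW by blast
    have r2: "\<And>i. cnt E (W - {v}) (Suc i) = cnt E (W - {v} - {u}) (Suc i) + cnt E (W - {v} - insert u {w. E u w}) i"
      using cnt_rec[OF symE irrE fA uA] .
    show ?thesis by (rule that(2)[OF v uA r1 r2])
  qed
qed

lemma maxcnt:
  assumes fo: "forest V E"
  shows "W \<subseteq> V \<Longrightarrow> cnt E W (Suc k) = 0 \<Longrightarrow> cnt E W k \<le> 2^(card W div 2)"
proof (induction "card W" arbitrary: W k rule: less_induct)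
  case less
  have fV: "finite V" using fo unfolding forest_def simple_graph_def by auto
  have fW: "finite W" using fV less.prems(1) finite_subset by blast
  show ?case
  proof (cases "W = {}")
    case True
    thus ?thesis by (cases k) (auto simp: cnt_0 cnt_big)
  next
    case ne: False
    show ?thesis
    proof (cases k)
      case 0 thus ?thesis using cnt_0[OF fW] by simp
    next
      case (Suc j)
      from leaf_setup[OF fo less.prems(1) ne] show ?thesis
      proof cases
        case (1 v)
        let ?A = "W - {v}"
        have cA: "card ?A < card W" by (rule card_Diff1_less[OF fW 1(1)])
        have "cnt E W (Suc k) = cnt E ?A (Suc k) + cnt E ?A k" by (rule 1(2))
        hence z: "cnt E ?A k = 0" using less.prems(2) by simp
        have "cnt E ?A j \<le> 2^(card ?A div 2)"
          using less.hyps[OF cA _ z[unfolded Suc]] less.prems(1) by auto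
        also have "\<dots> \<le> 2^(card W div 2)"
          by (rule power_increasing) (use cA in \<open>auto intro: div_le_mono\<close>)
        finally show ?thesis using 1(2)[of j] z unfolding Suc by simp
      next
        case (2 v u)
        let ?A = "W - {v}" let ?B = "W - {v} - {u}" let ?C = "W - {v} - insert u {w. E u w}"
        have uv: "u \<noteq> v" using 2(2) by simp
        have "card {v, u} \<le> card W" by (rule card_mono) (use fW 2(1,2) in auto)
        hence cW: "card W \<ge> 2" using uv by simp
        have cA: "card ?A < card W" by (rule card_Diff1_less[OF fW 2(1)])
        have cB: "card ?B = card W - 2"
        proof -
          have "card ?B = card ?A - 1" using 2(2) fW by (simp add: card_Diff_singleton)
          moreover have "card ?A = card W - 1" using 2(1) fW by (simp add: card_Diff_singleton)
          ultimately show ?thesis by simp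
        qed
        have CB: "?C \<subseteq> ?B" by auto
        have cCB: "card ?C \<le> card ?B" by (rule card_mono) (use fW CB in auto)
        have BW: "card ?B < card W" using cB cW by simp
        have "cnt E W (Suc (Suc j)) = 0" using less.prems(2) Suc by simp
        hence z1: "cnt E ?A (Suc (Suc j)) = 0" and z2: "cnt E ?B (Suc j) = 0" using 2(3)[of "Suc j"] by auto
        hence z3: "cnt E ?C (Suc j) = 0" using 2(4)[of "Suc j"] by simp
        have e: "cnt E W (Suc j) = cnt E ?C j + cnt E ?B j" using 2(3)[of j] 2(4)[of j] z2 by simp
        have h1: "cnt E ?B j \<le> 2^(card ?B div 2)"
          using less.hyps[OF BW _ z2] less.prems(1) by auto
        have h2: "cnt E ?C j \<le> 2^(card ?C div 2)"
          using less.hyps[of ?C j] cCB BW z3 less.prems(1) by auto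
        also have "\<dots> \<le> 2^(card ?B div 2)"
          by (rule power_increasing) (use cCB in \<open>auto intro: div_le_mono\<close>)
        finally have "cnt E W (Suc j) \<le> 2 * 2^(card ?B div 2)" using e h1 by simp
        also have "\<dots> = 2^(card W div 2)"
        proof -
          have "card W div 2 = Suc (card ?B div 2)" using cB cW by simp
          thus ?thesis by simp
        qed
        finally show ?thesis unfolding Suc .
      qed
    qed
  qed
qed

lemma maincnt:
  assumes fo: "forest V E"
  shows "W \<subseteq> V \<Longrightarrow> 0 < cnt E W (Suc k) \<Longrightarrow> real (cnt E W k) \<le> Fb (card W) * real (cnt E W (Suc k))"
proof (induction "card W" arbitrary: W k rule: less_induct)
  case less
  have fV: "finite V" using fo unfolding forest_def simple_graph_def by auto
  have fW: "finite W" using fV less.prems(1) finite_subset by blast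
  have ne: "W \<noteq> {}"
  proof
    assume e: "W = {}"
    have "cnt E W (Suc k) = 0" unfolding e by (rule cnt_big) auto
    thus False using less.prems(2) by simp
  qed
  have n1: "1 \<le> card W" using ne fW by (simp add: Suc_leI card_gt_0_iff)
  show ?case
  proof (cases k)
    case 0
    have "real (cnt E W 0) = 1" using cnt_0[OF fW] by simp
    also have "1 \<le> Fb (card W) * 1" using Fb_ge1[OF n1] by simp
    also have "\<dots> \<le> Fb (card W) * real (cnt E W (Suc k))"
      using less.prems(2) Fb_ge1[OF n1] by (intro mult_left_mono) auto
    finally show ?thesis using 0 by simp
  next
    case (Suc j)
    from leaf_setup[OF fo less.prems(1) ne] show ?thesis
    proof cases
      case (1 v)
      let ?A = "W - {v}"
      have cA: "card ?A < card W" by (rule card_Diff1_less[OF fW 1(1)])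
      have cAe: "card ?A = card W - 1" using 1(1) fW by (simp add: card_Diff_singleton)
      have AV: "?A \<subseteq> V" using less.prems(1) by auto
      have fA: "finite ?A" using fW by simp
      have eW1: "cnt E W (Suc (Suc j)) = cnt E ?A (Suc (Suc j)) + cnt E ?A (Suc j)" by (rule 1(2))
      have eW0: "cnt E W (Suc j) = cnt E ?A (Suc j) + cnt E ?A j" by (rule 1(2))
      show ?thesis
      proof (cases "0 < cnt E ?A (Suc (Suc j))")
        case True
        have i1: "real (cnt E ?A (Suc j)) \<le> Fb (card ?A) * cnt E ?A (Suc (Suc j))"
          using less.hyps[OF cA AV True] .
        have pos: "0 < cnt E ?A (Suc j)" by (rule cnt_down[OF fA True])
        have i2: "real (cnt E ?A j) \<le> Fb (card ?A) * cnt E ?A (Suc j)"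
          using less.hyps[OF cA AV pos] .
        have "real (cnt E W (Suc j)) \<le> Fb (card ?A) * real (cnt E W (Suc (Suc j)))"
          using i1 i2 eW0 eW1 by (simp add: algebra_simps)
        also have "\<dots> \<le> Fb (card W) * real (cnt E W (Suc (Suc j)))"
          by (rule mult_right_mono) (use cA Fb_mono in auto)
        finally show ?thesis using Suc by simp
      next
        case False
        hence z: "cnt E ?A (Suc (Suc j)) = 0" by simp
        have pos: "0 < cnt E ?A (Suc j)" using less.prems(2) eW1 z Suc by simp
        have "?A \<noteq> {}"
        proof
          assume e: "?A = {}"
          have "cnt E ?A (Suc j) = 0" unfolding e by (rule cnt_big) auto
          thus False using pos by simp
        qed
        hence A1: "1 \<le> card ?A" using fA by (simp add: Suc_leI card_gt_0_iff)
        have i2: "real (cnt E ?A j) \<le> Fb (card ?A) * cnt E ?A (Suc j)"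
          using less.hyps[OF cA AV pos] .
        have st: "1 + Fb (card ?A) \<le> Fb (card W)"
          using Fb_step1[OF A1] cA cAe by (metis Suc_diff_1 less_nat_zero_code nat_neq_iff)
        have "real (cnt E W (Suc j)) \<le> (1 + Fb (card ?A)) * real (cnt E ?A (Suc j))"
          using i2 eW0 by (simp add: algebra_simps)
        also have "\<dots> \<le> Fb (card W) * real (cnt E ?A (Suc j))"
          by (rule mult_right_mono[OF st]) simp
        finally show ?thesis using Suc eW1 z by simp
      qed
    next
      case (2 v u)
      let ?A = "W - {v}" let ?B = "W - {v} - {u}" let ?C = "W - {v} - insert u {w. E u w}"
      have uv: "u \<noteq> v" using 2(2) by simp
      have "card {v, u} \<le> card W" by (rule card_mono) (use fW 2(1,2) in auto)
      hence cW: "card W \<ge> 2" using uv by simp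
      have cA: "card ?A < card W" by (rule card_Diff1_less[OF fW 2(1)])
      have cAe: "card ?A = card W - 1" using 2(1) fW by (simp add: card_Diff_singleton)
      have cB: "card ?B = card W - 2"
      proof -
        have "card ?B = card ?A - 1" using 2(2) fW by (simp add: card_Diff_singleton)
        thus ?thesis using cAe by simp
      qed
      have CB: "?C \<subseteq> ?B" by auto
      have fA: "finite ?A" and fB: "finite ?B" using fW by auto
      have AV: "?A \<subseteq> V" and BV: "?B \<subseteq> V" and CV: "?C \<subseteq> V" using less.prems(1) by auto
      have BW: "card ?B < card W" using cB cW by simp
      have eW1: "cnt E W (Suc (Suc j)) = cnt E ?A (Suc (Suc j)) + cnt E ?B (Suc j)" by (rule 2(3))
      have eW0: "cnt E W (Suc j) = cnt E ?A (Suc j) + cnt E ?B j" by (rule 2(3))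
      have eA1: "cnt E ?A (Suc (Suc j)) = cnt E ?B (Suc (Suc j)) + cnt E ?C (Suc j)" by (rule 2(4))
      have eA0: "cnt E ?A (Suc j) = cnt E ?B (Suc j) + cnt E ?C j" by (rule 2(4))
      show ?thesis
      proof (cases "0 < cnt E ?A (Suc (Suc j))")
        case True
        have i1: "real (cnt E ?A (Suc j)) \<le> Fb (card ?A) * cnt E ?A (Suc (Suc j))"
          using less.hyps[OF cA AV True] .
        have pos: "0 < cnt E ?B (Suc j)"
        proof (cases "0 < cnt E ?B (Suc (Suc j))")
          case True thus ?thesis by (rule cnt_down[OF fB])
        next
          case False
          hence "0 < cnt E ?C (Suc j)" using eA1 \<open>0 < cnt E ?A (Suc (Suc j))\<close> by simp
          also have "cnt E ?C (Suc j) \<le> cnt E ?B (Suc j)" by (rule cnt_mono[OF fB CB])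
          finally show ?thesis .
        qed
        have i2: "real (cnt E ?B j) \<le> Fb (card ?B) * cnt E ?B (Suc j)"
          using less.hyps[OF BW BV pos] .
        have m1: "Fb (card ?A) \<le> Fb (card W)" using cA Fb_mono by simp
        have m2: "Fb (card ?B) \<le> Fb (card W)" using BW Fb_mono by simp
        have "real (cnt E W (Suc j)) = real (cnt E ?A (Suc j)) + real (cnt E ?B j)" using eW0 by simp
        also have "\<dots> \<le> Fb (card W) * cnt E ?A (Suc (Suc j)) + Fb (card W) * cnt E ?B (Suc j)"
        proof (rule add_mono)
          show "real (cnt E ?A (Suc j)) \<le> Fb (card W) * cnt E ?A (Suc (Suc j))"
            using i1 mult_right_mono[OF m1, of "real (cnt E ?A (Suc (Suc j)))"] by simp
          show "real (cnt E ?B j) \<le> Fb (card W) * cnt E ?B (Suc j)"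
            using i2 mult_right_mono[OF m2, of "real (cnt E ?B (Suc j))"] by simp
        qed
        also have "\<dots> = Fb (card W) * real (cnt E W (Suc (Suc j)))"
          using eW1 by (simp add: algebra_simps)
        finally show ?thesis using Suc by simp
      next
        case False
        hence z1: "cnt E ?A (Suc (Suc j)) = 0" by simp
        hence z2: "cnt E ?B (Suc (Suc j)) = 0" and z3: "cnt E ?C (Suc j) = 0" using eA1 by auto
        have pos: "0 < cnt E ?B (Suc j)" using less.prems(2) eW1 z1 Suc by simp
        have CnB: "?C \<noteq> ?B"
        proof
          assume e: "?C = ?B"
          have "cnt E ?C (Suc j) = cnt E ?B (Suc j)" by (simp only: e)
          thus False using z3 pos by simp
        qed
        have cCB: "card ?C < card ?B" by (rule psubset_card_mono) (use fB CB CnB in auto)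
        define m where "m = card W - 3"
        have m: "card W = m + 3" using cCB cB unfolding m_def by arith
        have cC: "card ?C \<le> m" using cCB cB unfolding m_def by arith
        have cBm: "card ?B = Suc m" using cB m by simp
        have i2: "real (cnt E ?B j) \<le> Fb (card ?B) * cnt E ?B (Suc j)"
          using less.hyps[OF BW BV pos] .
        have i3: "cnt E ?C j \<le> 2^(card ?C div 2)" by (rule maxcnt[OF fo CV z3])
        also have "\<dots> \<le> 2^(m div 2)"
          by (rule power_increasing) (use cC in \<open>auto intro: div_le_mono\<close>)
        finally have i3': "real (cnt E ?C j) \<le> 2^(m div 2)" by (metis of_nat_le_iff of_nat_numeral of_nat_power)
        have b1: "1 \<le> real (cnt E ?B (Suc j))" using pos by simp
        have "(2::real)^(m div 2) \<le> 2^(m div 2) * real (cnt E ?B (Suc j))"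
          using b1 by simp
        have "real (cnt E W (Suc j)) = real (cnt E ?B (Suc j)) + real (cnt E ?C j) + real (cnt E ?B j)"
          using eW0 eA0 by simp
        also have "\<dots> \<le> real (cnt E ?B (Suc j)) + 2^(m div 2) * real (cnt E ?B (Suc j)) + Fb (Suc m) * cnt E ?B (Suc j)"
          using i2[unfolded cBm] i3' \<open>(2::real)^(m div 2) \<le> 2^(m div 2) * real (cnt E ?B (Suc j))\<close> by linarith
        also have "\<dots> = (1 + Fb (Suc m) + 2^(m div 2)) * real (cnt E ?B (Suc j))"
          by (simp add: algebra_simps)
        also have "\<dots> \<le> Fb (m + 3) * real (cnt E ?B (Suc j))"
          by (rule mult_right_mono[OF Fb_step3]) simp
        finally show ?thesis using Suc m eW1 z1 by simp
      qed
    qed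
  qed
qed

lemma indep_count_cnt: "indep_count V E k = cnt E V k"
  unfolding indep_count_def cnt_def independent_set_def by simp

theorem theorem5:
  fixes V :: "'a set" and E :: "'a \<Rightarrow> 'a \<Rightarrow> bool" and n :: nat and z :: complex
  assumes "n \<ge> 1"
    and "forest V E"
    and "card V = n"
    and "poly (indep_poly V E) z = 0"
  shows "cmod z \<le> (if odd n then 2 powr ((real n - 1) / 2) + (real n - 1) / 2
                    else 2 powr ((real n - 2) / 2) + real n / 2)"
proof -
  have fV: "finite V" using assms(2) unfolding forest_def simple_graph_def by auto
  define K where "K = {k. 0 < cnt E V k}"
  have KS: "K \<subseteq> {..n}"
  proof
    fix k assume "k \<in> K"
    hence k0: "0 < cnt E V k" by (simp add: K_def)
    show "k \<in> {..n}"
    proof (rule ccontr)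
      assume "k \<notin> {..n}"
      hence "card V < k" using assms(3) by simp
      thus False using cnt_big[OF fV] k0 by simp
    qed
  qed
  have finK: "finite K" using KS finite_subset by blast
  have K0: "0 \<in> K" unfolding K_def using cnt_0[OF fV] by simp
  define d where "d = Max K"
  have dK: "d \<in> K" unfolding d_def using finK K0 by (intro Max_in) auto
  have dn: "d \<le> n" using dK KS by auto
  have above: "\<And>k. d < k \<Longrightarrow> cnt E V k = 0"
  proof -
    fix k assume "d < k"
    hence "k \<notin> K" unfolding d_def using finK Max_ge leD by blast
    thus "cnt E V k = 0" unfolding K_def by simp
  qed
  have pos: "\<And>k. k \<le> d \<Longrightarrow> 0 < real (cnt E V k)"
    using cnt_down_le[OF fV] dK unfolding K_def by simp
  have rat: "\<And>k. k < d \<Longrightarrow> real (cnt E V k) \<le> Fb n * real (cnt E V (Suc k))"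
  proof -
    fix k assume "k < d"
    hence "0 < cnt E V (Suc k)" using cnt_down_le[OF fV] dK unfolding K_def by simp
    from maincnt[OF assms(2) order_refl this] show "real (cnt E V k) \<le> Fb n * real (cnt E V (Suc k))"
      using assms(3) by simp
  qed
  have "poly (indep_poly V E) z = (\<Sum>k\<le>n. of_real (real (cnt E V k)) * z^k)"
    unfolding indep_poly_def poly_sum poly_monom indep_count_cnt assms(3) by simp
  also have "\<dots> = (\<Sum>k\<le>d. of_real (real (cnt E V k)) * z^k)"
    by (rule sum.mono_neutral_right) (use dn above in auto)
  finally have root: "(\<Sum>k\<le>d. of_real (real (cnt E V k)) * z^k) = 0" using assms(4) by simp
  have "cmod z \<le> Fb n"
    by (rule ek[OF pos rat _ root]) (use Fb_ge1[OF assms(1)] in auto)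
  thus ?thesis using Fb_eq[OF assms(1)] by simp
qed

end
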